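(* For every edge-colored hypergraph $H=(V,E,C,\ell)$ with weights $w_e \ge 0$, the optimal value of the node-weighted multiway cut LP relaxation on the reduced graph $G(H)$ is at most the optimal value of the \textsc{MinECC} LP relaxation on $H$. Moreover, the inequality can be strict: for $C=\{1,2,3\}$ and $H$ the star graph with center $v_0$, leaves $v_1,v_2,v_3$ and unit-weight edges $e_i=\{v_0,v_i\}$ of color $i$ ($i=1,2,3$), the \textsc{MinECC} LP relaxation has optimal value $2$ while the node-weighted multiway cut LP relaxation on $G(H)$ has optimal value $\frac32$.
   Context: An edge-colored hypergraph is $H=(V,E,C,\ell)$ with finite node set $V$, a multiset $E$ of nonempty subsets of $V$ (edges), a color set $C=[k]$, a map $\ell\colon E\to C$, and weights $w_e\ge 0$. The \textsc{MinECC} LP relaxation has variables $x_v^i$ ($v\in V,i\in C$), $x_e$ ($e\in E$) and is: minimize $\sum_{e} w_e x_e$ subject to $\sum_{i=1}^k x_v^i = k-1$ for all $v$; $x_e\ge x_v^{\ell(e)}$ for all $e$ and $v\in e$; $0\le x_v^i\le 1$; $0\le x_e\le 1$. The reduced graph $G(H)=(\hat V,\hat E)$ has node set $\hat V = T\cup V\cup V_E$, where $T=\{t_1,\dots,t_k\}$ are terminal nodes (one per color) and $V_E=\{v_e: e\in E\}$ has one node per edge of $H$; its edge set consists of $(v,v_e)$ for every $e\in E$ and $v\in e$, and $(t_{\ell(e)},v_e)$ for every $e\in E$. Nodes $v_e$ have weight $w_e$; nodes in $V\cup T$ have infinite weight. The node-weighted multiway cut LP relaxation on $G(H)$ has variables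 $d_u\ge 0$ for $u\in\hat V$ and $y_u^i$ for $u\in \hat V$, $i\in[k]$, with $d_u=0$ for all $u\in V\cup T$ (infinite-weight nodes), and is: minimize $\sum_{e\in E} w_e d_{v_e}$ subject to $y_b^i \le y_a^i + d_b$ and $y_a^i\le y_b^i + d_a$ for every edge $(a,b)\in\hat E$ and every $i\in[k]$; $y_{t_i}^i=0$ for all $i$; $y_{t_i}^j\ge 1$ for all $i\neq j$. (Equivalently: minimize $\sum_e w_e d_{v_e}$ subject to $d\ge 0$, $d=0$ on $V\cup T$, and $\sum_{u\in P} d_u\ge 1$ for every path $P$ in $G(H)$ between two distinct terminals.) *)

theory Defs
  imports Complex_Main "HOL-Library.Extended_Real"
begin

text \<open>The multiset of edges is represented by a finite index set E together with
  a map edge assigning to each index its node set (so parallel edges are allowed).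
  col is the coloring l, w the weights.\<close>

definition ec_hypergraph ::
  "'v set \<Rightarrow> 'e set \<Rightarrow> ('e \<Rightarrow> 'v set) \<Rightarrow> nat \<Rightarrow> ('e \<Rightarrow> nat) \<Rightarrow> ('e \<Rightarrow> real) \<Rightarrow> bool" where
  "ec_hypergraph V E edge k col w \<longleftrightarrow>
     finite V \<and> finite E \<and>
     (\<forall>e\<in>E. edge e \<noteq> {} \<and> edge e \<subseteq> V \<and> col e \<in> {1..k} \<and> w e \<ge> 0)"

definition minecc_lp_feasible ::
  "'v set \<Rightarrow> 'e set \<Rightarrow> ('e \<Rightarrow> 'v set) \<Rightarrow> nat \<Rightarrow> ('e \<Rightarrow> nat)
    \<Rightarrow> ('v \<Rightarrow> nat \<Rightarrow> real) \<Rightarrow> ('e \<Rightarrow> real) \<Rightarrow> bool" where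
  "minecc_lp_feasible V E edge k col x xe \<longleftrightarrow>
     (\<forall>v\<in>V. (\<Sum>i=1..k. x v i) = real k - 1) \<and>
     (\<forall>e\<in>E. \<forall>v\<in>edge e. xe e \<ge> x v (col e)) \<and>
     (\<forall>v\<in>V. \<forall>i\<in>{1..k}. 0 \<le> x v i \<and> x v i \<le> 1) \<and>
     (\<forall>e\<in>E. 0 \<le> xe e \<and> xe e \<le> 1)"

text \<open>Optimal value (infimum of the objective over the feasible region), in the
  extended reals so that an infeasible LP has value +infinity.\<close>

definition minecc_lp_opt ::
  "'v set \<Rightarrow> 'e set \<Rightarrow> ('e \<Rightarrow> 'v set) \<Rightarrow> nat \<Rightarrow> ('e \<Rightarrow> nat) \<Rightarrow> ('e \<Rightarrow> real) \<Rightarrow> ereal" where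
  "minecc_lp_opt V E edge k col w =
     Inf {ereal (\<Sum>e\<in>E. w e * xe e) | x xe. minecc_lp_feasible V E edge k col x xe}"

datatype ('v, 'e) gnode = Term nat | VNode 'v | ENode 'e

definition red_nodes :: "'v set \<Rightarrow> 'e set \<Rightarrow> nat \<Rightarrow> ('v, 'e) gnode set" where
  "red_nodes V E k = Term ` {1..k} \<union> VNode ` V \<union> ENode ` E"

definition red_edges ::
  "'e set \<Rightarrow> ('e \<Rightarrow> 'v set) \<Rightarrow> ('e \<Rightarrow> nat) \<Rightarrow> (('v, 'e) gnode \<times> ('v, 'e) gnode) set" where
  "red_edges E edge col =
     {(VNode v, ENode e) | v e. e \<in> E \<and> v \<in> edge e} \<union>
     {(Term (col e), ENode e) | e. e \<in> E}"

text \<open>Node-weighted multiway cut LP relaxation on G(H): variables d u and y u i.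
  Infinite-weight nodes (V and T) are forced to have d = 0.\<close>

definition nwmc_lp_feasible ::
  "'v set \<Rightarrow> 'e set \<Rightarrow> ('e \<Rightarrow> 'v set) \<Rightarrow> nat \<Rightarrow> ('e \<Rightarrow> nat)
    \<Rightarrow> (('v, 'e) gnode \<Rightarrow> real) \<Rightarrow> (('v, 'e) gnode \<Rightarrow> nat \<Rightarrow> real) \<Rightarrow> bool" where
  "nwmc_lp_feasible V E edge k col d y \<longleftrightarrow>
     (\<forall>u\<in>red_nodes V E k. d u \<ge> 0) \<and>
     (\<forall>v\<in>V. d (VNode v) = 0) \<and>
     (\<forall>i\<in>{1..k}. d (Term i) = 0) \<and>
     (\<forall>(a, b)\<in>red_edges E edge col. \<forall>i\<in>{1..k}.
        y b i \<le> y a i + d b \<and> y a i \<le> y b i + d a) \<and>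
     (\<forall>i\<in>{1..k}. y (Term i) i = 0) \<and>
     (\<forall>i\<in>{1..k}. \<forall>j\<in>{1..k}. i \<noteq> j \<longrightarrow> y (Term i) j \<ge> 1)"

definition nwmc_lp_opt ::
  "'v set \<Rightarrow> 'e set \<Rightarrow> ('e \<Rightarrow> 'v set) \<Rightarrow> nat \<Rightarrow> ('e \<Rightarrow> nat) \<Rightarrow> ('e \<Rightarrow> real) \<Rightarrow> ereal" where
  "nwmc_lp_opt V E edge k col w =
     Inf {ereal (\<Sum>e\<in>E. w e * d (ENode e)) | d y. nwmc_lp_feasible V E edge k col d y}"

end

theory Submission
  imports Defs
begin

lemma red_edges_ball:
  "(\<forall>(a,b)\<in>red_edges E edge col. P a b) \<longleftrightarrow>
   (\<forall>e\<in>E. (\<forall>v\<in>edge e. P (VNode v) (ENode e)) \<and> P (Term (col e)) (ENode e))"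
  by (auto simp: red_edges_def)

lemma pair_bound:
  fixes f :: "nat \<Rightarrow> real"
  assumes s: "(\<Sum>j=1..k. f j) = real k - 1" and b: "\<forall>j\<in>{1..k}. f j \<le> 1"
    and i: "i\<in>{1..k}" and c: "c\<in>{1..k}" and ne: "i\<noteq>c"
  shows "1 \<le> f i + f c"
proof -
  have sub: "{i,c} \<subseteq> {1..k}" using i c by auto
  have "(\<Sum>j=1..k. f j) = (\<Sum>j\<in>{1..k}-{i,c}. f j) + (\<Sum>j\<in>{i,c}. f j)"
    using sum.subset_diff[OF sub] by simp
  also have "(\<Sum>j\<in>{i,c}. f j) = f i + f c" using ne by simp
  finally have eq: "(\<Sum>j=1..k. f j) = (\<Sum>j\<in>{1..k}-{i,c}. f j) + (f i + f c)" .
  have "(\<Sum>j\<in>{1..k}-{i,c}. f j) \<le> (\<Sum>j\<in>{1..k}-{i,c}. 1)"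
    by (rule sum_mono) (use b in auto)
  also have "\<dots> = real (card ({1..k}-{i,c}))" by simp
  also have "card ({1..k}-{i,c}) = k - 2"
    using card_Diff_subset[OF _ sub] ne by simp
  finally have le: "(\<Sum>j\<in>{1..k}-{i,c}. f j) \<le> real (k - 2)" .
  have "k \<ge> 2" using i c ne by auto
  then have "real (k-2) = real k - 2" by simp
  then show ?thesis using s eq le by linarith
qed

lemma part1:
  assumes H: "ec_hypergraph V E edge k col w"
  shows "nwmc_lp_opt V E edge k col w \<le> minecc_lp_opt V E edge k col w"
  unfolding nwmc_lp_opt_def minecc_lp_opt_def
proof (rule Inf_mono)
  fix b assume "b \<in> {ereal (\<Sum>e\<in>E. w e * xe e) | x xe. minecc_lp_feasible V E edge k col x xe}"
  then obtain x xe where b: "b = ereal (\<Sum>e\<in>E. w e * xe e)" and F: "minecc_lp_feasible V E edge k col x xe"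
    by blast
  define d :: "('a,'b) gnode \<Rightarrow> real" where "d = (\<lambda>u. case u of ENode e \<Rightarrow> xe e | _ \<Rightarrow> 0)"
  define y :: "('a,'b) gnode \<Rightarrow> nat \<Rightarrow> real" where
    "y = (\<lambda>u i. case u of Term j \<Rightarrow> (if i = j then 0 else 1)
                 | VNode v \<Rightarrow> x v i
                 | ENode e \<Rightarrow> (if i = col e then xe e else 1))"
  have Fs: "\<forall>v\<in>V. (\<Sum>i=1..k. x v i) = real k - 1"
    "\<forall>e\<in>E. \<forall>v\<in>edge e. xe e \<ge> x v (col e)"
    "\<forall>v\<in>V. \<forall>i\<in>{1..k}. 0 \<le> x v i \<and> x v i \<le> 1"
    "\<forall>e\<in>E. 0 \<le> xe e \<and> xe e \<le> 1" using F unfolding minecc_lp_feasible_def by auto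
  have Hs: "\<forall>e\<in>E. edge e \<noteq> {} \<and> edge e \<subseteq> V \<and> col e \<in> {1..k} \<and> w e \<ge> 0"
    using H unfolding ec_hypergraph_def by auto
  have key: "1 \<le> x v i + xe e" if "e\<in>E" "v\<in>edge e" "i\<in>{1..k}" "i \<noteq> col e" for e v i
  proof -
    have v: "v\<in>V" using Hs that by auto
    have "1 \<le> x v i + x v (col e)"
      apply (rule pair_bound[where k=k])
      using Fs v that Hs by auto
    then show ?thesis using Fs that by fastforce
  qed
  have "nwmc_lp_feasible V E edge k col d y"
    unfolding nwmc_lp_feasible_def red_edges_ball
  proof (intro conjI)
    show "\<forall>u\<in>red_nodes V E k. 0 \<le> d u" using Fs by (auto simp: red_nodes_def d_def)
  next
    show "\<forall>e\<in>E. (\<forall>v\<in>edge e. \<forall>i\<in>{1..k}. y (ENode e) i \<le> y (VNode v) i + d (ENode e) \<and>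
          y (VNode v) i \<le> y (ENode e) i + d (VNode v)) \<and>
          (\<forall>i\<in>{1..k}. y (ENode e) i \<le> y (Term (col e)) i + d (ENode e) \<and>
          y (Term (col e)) i \<le> y (ENode e) i + d (Term (col e)))"
    proof (intro ballI conjI)
      fix e i assume e: "e\<in>E" and i: "i\<in>{1..k}"
      show "y (ENode e) i \<le> y (Term (col e)) i + d (ENode e)"
           "y (Term (col e)) i \<le> y (ENode e) i + d (Term (col e))"
        using Fs e by (auto simp: y_def d_def)
    next
      fix e v i assume e: "e\<in>E" and v: "v \<in> edge e" and i: "i\<in>{1..k}"
      have vV: "v\<in>V" using Hs e v by auto
      show "y (ENode e) i \<le> y (VNode v) i + d (ENode e)"
           "y (VNode v) i \<le> y (ENode e) i + d (VNode v)"
      proof -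
        consider "i = col e" | "i \<noteq> col e" by blast
        then have "y (ENode e) i \<le> y (VNode v) i + d (ENode e) \<and>
          y (VNode v) i \<le> y (ENode e) i + d (VNode v)"
        proof cases
          case 1 then show ?thesis using Fs e v vV i Hs by (fastforce simp: y_def d_def)
        next
          case 2 then show ?thesis using key[OF e v i 2] Fs vV i by (auto simp: y_def d_def)
        qed
        then show "y (ENode e) i \<le> y (VNode v) i + d (ENode e)"
           "y (VNode v) i \<le> y (ENode e) i + d (VNode v)" by auto
      qed
    qed
  qed (auto simp: d_def y_def)
  moreover have "ereal (\<Sum>e\<in>E. w e * d (ENode e)) = b" by (simp add: b d_def)
  ultimately show "\<exists>a\<in>{ereal (\<Sum>e\<in>E. w e * d (ENode e)) | d y. nwmc_lp_feasible V E edge k col d y}. a \<le> b"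
    by force
qed

lemma three: "{1..3::nat} = {1,2,3}" by auto
lemma three2: "{Suc 0..3} = {Suc 0,2,3}" by auto

lemma p2_feas: "minecc_lp_feasible {0::nat, 1, 2, 3} {1::nat, 2, 3} (\<lambda>i. {0, i}) 3 (\<lambda>i. i)
   (\<lambda>v i. if v = 0 then (if i = 3 then 0 else 1) else (if i = v then 0 else 1))
   (\<lambda>e. if e = 3 then 0 else 1)"
  unfolding minecc_lp_feasible_def three by auto

lemma p2_low: "minecc_lp_feasible {0::nat, 1, 2, 3} {1::nat, 2, 3} (\<lambda>i. {0, i}) 3 (\<lambda>i. i) x xe
   \<Longrightarrow> 2 \<le> (\<Sum>e\<in>{1::nat,2,3}. 1 * xe e)"
  unfolding minecc_lp_feasible_def three by auto

lemma part2:
  "minecc_lp_opt {0::nat, 1, 2, 3} {1::nat, 2, 3} (\<lambda>i. {0, i}) 3 (\<lambda>i. i) (\<lambda>_. 1) = ereal 2"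
  unfolding minecc_lp_opt_def
  apply (rule antisym)
   apply (rule Inf_lower)
   apply (rule CollectI)
   apply (rule exI[where x="\<lambda>v i. if v = 0 then (if i = 3 then 0 else 1) else (if i = v then 0 else 1)"])
   apply (rule exI[where x="\<lambda>e. if e = 3 then 0 else 1"])
   apply (intro conjI p2_feas)
   apply simp
  apply (rule Inf_greatest)
  using p2_low by fastforce

lemma part3:
  "nwmc_lp_opt {0::nat, 1, 2, 3} {1::nat, 2, 3} (\<lambda>i. {0, i}) 3 (\<lambda>i. i) (\<lambda>_. 1) = ereal (3 / 2)"
  unfolding nwmc_lp_opt_def
proof (rule antisym)
  define d :: "(nat, nat) gnode \<Rightarrow> real" where "d = (\<lambda>u. case u of ENode e \<Rightarrow> 1/2 | _ \<Rightarrow> 0)"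
  define y :: "(nat, nat) gnode \<Rightarrow> nat \<Rightarrow> real" where
    "y = (\<lambda>u j. case u of Term i \<Rightarrow> (if i = j then 0 else 1)
                 | VNode v \<Rightarrow> (if v = 0 then 1/2 else if v = j then 1/2 else 1)
                 | ENode e \<Rightarrow> (if e = j then 1/2 else 1))"
  have "nwmc_lp_feasible {0::nat, 1, 2, 3} {1::nat, 2, 3} (\<lambda>i. {0, i}) 3 (\<lambda>i. i) d y"
    unfolding nwmc_lp_feasible_def red_edges_ball three
    by (auto simp: d_def y_def red_nodes_def three2)
  moreover have "(\<Sum>e\<in>{1::nat,2,3}. 1 * d (ENode e)) = 3/2" by (simp add: d_def)
  ultimately have "ereal (3/2) \<in> {ereal (\<Sum>e\<in>{1::nat,2,3}. 1 * d (ENode e)) | d y.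
      nwmc_lp_feasible {0::nat, 1, 2, 3} {1::nat, 2, 3} (\<lambda>i. {0, i}) 3 (\<lambda>i. i) d y}"
    by force
  then show "Inf {ereal (\<Sum>e\<in>{1::nat,2,3}. 1 * d (ENode e)) | d y.
      nwmc_lp_feasible {0::nat, 1, 2, 3} {1::nat, 2, 3} (\<lambda>i. {0, i}) 3 (\<lambda>i. i) d y} \<le> ereal (3/2)"
    by (rule Inf_lower)
next
  show "ereal (3/2) \<le> Inf {ereal (\<Sum>e\<in>{1::nat,2,3}. 1 * d (ENode e)) | d y.
      nwmc_lp_feasible {0::nat, 1, 2, 3} {1::nat, 2, 3} (\<lambda>i. {0, i}) 3 (\<lambda>i. i) d y}"
  proof (rule Inf_greatest)
    fix a assume "a \<in> {ereal (\<Sum>e\<in>{1::nat,2,3}. 1 * d (ENode e)) | d y.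
      nwmc_lp_feasible {0::nat, 1, 2, 3} {1::nat, 2, 3} (\<lambda>i. {0, i}) 3 (\<lambda>i. i) d y}"
    then obtain d y where a: "a = ereal (\<Sum>e\<in>{1::nat,2,3}. 1 * d (ENode e))"
      and F: "nwmc_lp_feasible {0::nat, 1, 2, 3} {1::nat, 2, 3} (\<lambda>i. {0, i}) 3 (\<lambda>i. i) d y"
      by blast
    have pair: "1 \<le> d (ENode i) + d (ENode j)" if "i \<in> {1,2,3}" "j \<in> {1,2,3}" "i \<noteq> j" for i j
    proof -
      have j3: "j \<in> {1..3}" "i \<in> {1..3}" using that by auto
      have E: "\<forall>e\<in>{1::nat,2,3}. (\<forall>v\<in>{0,e}. \<forall>c\<in>{1..3}.
           y (ENode e) c \<le> y (VNode v) c + d (ENode e) \<and> y (VNode v) c \<le> y (ENode e) c + d (VNode v)) \<and>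
           (\<forall>c\<in>{1..3}. y (ENode e) c \<le> y (Term e) c + d (ENode e) \<and> y (Term e) c \<le> y (ENode e) c + d (Term e))"
        using F unfolding nwmc_lp_feasible_def red_edges_ball by blast
      have d0: "d (VNode 0) = 0" "d (Term i) = 0" using F j3 unfolding nwmc_lp_feasible_def by auto
      have t: "y (Term j) j = 0" "y (Term i) j \<ge> 1" using F j3 that unfolding nwmc_lp_feasible_def by auto
      have c1: "y (Term i) j \<le> y (ENode i) j + d (Term i)" using E that j3 by blast
      have c2: "y (ENode i) j \<le> y (VNode 0) j + d (ENode i)" using E that j3 by blast
      have c3: "y (VNode 0) j \<le> y (ENode j) j + d (VNode 0)" using E that j3 by blast
      have c4: "y (ENode j) j \<le> y (Term j) j + d (ENode j)" using E that j3 by blast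
      show ?thesis using c1 c2 c3 c4 t d0 by linarith
    qed
    have "1 \<le> d (ENode 1) + d (ENode 2)" "1 \<le> d (ENode 1) + d (ENode 3)" "1 \<le> d (ENode 2) + d (ENode 3)"
      by (rule pair; simp)+
    then show "ereal (3/2) \<le> a" by (simp add: a)
  qed
qed

theorem theorem1:
  fixes V :: "'v set" and E :: "'e set" and edge :: "'e \<Rightarrow> 'v set"
    and k :: nat and col :: "'e \<Rightarrow> nat" and w :: "'e \<Rightarrow> real"
  shows "(ec_hypergraph V E edge k col w \<longrightarrow>
            nwmc_lp_opt V E edge k col w \<le> minecc_lp_opt V E edge k col w)
         \<and> minecc_lp_opt {0::nat, 1, 2, 3} {1::nat, 2, 3} (\<lambda>i. {0, i}) 3 (\<lambda>i. i) (\<lambda>_. 1) = ereal 2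
         \<and> nwmc_lp_opt {0::nat, 1, 2, 3} {1::nat, 2, 3} (\<lambda>i. {0, i}) 3 (\<lambda>i. i) (\<lambda>_. 1) = ereal (3 / 2)"
  by (intro conjI impI part1 part2 part3)

end
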